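(* Let $G$ be a compact group with Haar probability measure $\lambda$, let $\mathcal E$ be a finite partition of $G$ into Borel sets and let $y\in G$. Define, for $D\in Bor(G\times G)$, $$\nu_{y,\mathcal E}(D)=\sum_{E\in\mathcal E^\ast}\frac{\lambda_2\big(D\cap(E\times(E\oplus y))\big)}{\lambda(E)}.$$ Then $\nu_{y,\mathcal E}\in P(G\times G)$ and $\nu_{y,\mathcal E}(B\times G)=\nu_{y,\mathcal E}(G\times B)=\lambda(B)$ for every Borel set $B\subseteq G$.
   Context: $G=(G,\oplus)$ is a compact Hausdorff group (written additively but not necessarily commutative), $\lambda$ its (two-sided invariant) Haar probability measure, and $E\oplus y=\{e\oplus y: e\in E\}$. $\lambda_2$ is the product measure $\lambda\otimes\lambda$ on $G\times G$, extended uniquely to a regular Borel probability measure. $\mathcal E^\ast$ is the set of $E\in\mathcal E$ with $\lambda(E)>0$. $P(X)$ denotes the set of regular Borel probability measures on a compact space $X$. *)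

theory Defs
  imports "HOL-Probability.Probability"
begin

definition regular_borel :: "'a::topological_space measure \<Rightarrow> bool" where
  "regular_borel M \<longleftrightarrow> sets M = sets borel \<and>
     (\<forall>A \<in> sets borel.
        emeasure M A = (SUP K \<in> {K. compact K \<and> K \<subseteq> A}. emeasure M K) \<and>
        emeasure M A = (INF U \<in> {U. open U \<and> A \<subseteq> U}. emeasure M U))"

definition regular_borel_prob :: "'a::topological_space measure \<Rightarrow> bool" where
  "regular_borel_prob M \<longleftrightarrow> regular_borel M \<and> prob_space M"

definition haar_prob :: "'a::topological_group_add measure \<Rightarrow> bool" where
  "haar_prob lam \<longleftrightarrow> regular_borel_prob lam \<and>
     (\<forall>A \<in> sets borel. \<forall>y.
        emeasure lam ((\<lambda>x. x + y) ` A) = emeasure lam A \<and>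
        emeasure lam ((\<lambda>x. y + x) ` A) = emeasure lam A)"

text \<open>lambda_2: the unique regular Borel probability measure on G x G extending the
  product measure lambda (x) lambda (i.e. agreeing with it on measurable rectangles).\<close>
definition haar_prod :: "'a::topological_group_add measure \<Rightarrow> ('a \<times> 'a) measure \<Rightarrow> bool" where
  "haar_prod lam lam2 \<longleftrightarrow> regular_borel_prob lam2 \<and>
     (\<forall>A \<in> sets borel. \<forall>B \<in> sets borel.
        emeasure lam2 (A \<times> B) = emeasure lam A * emeasure lam B)"

definition finite_borel_partition :: "'a::topological_space set set \<Rightarrow> bool" where
  "finite_borel_partition \<E> \<longleftrightarrow> finite \<E> \<and> \<E> \<subseteq> sets borel \<and> {} \<notin> \<E> \<and>
     disjoint \<E> \<and> \<Union>\<E> = UNIV"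

end

theory Submission
  imports Defs
begin

lemma approx_inner:
  assumes fm: "finite_measure N" and eq: "emeasure N A = (SUP K\<in>Ks. emeasure N K)"
    and ne: "Ks \<noteq> {}" and d: "0 < d"
  shows "\<exists>K\<in>Ks. measure N A < measure N K + d"
proof (rule ccontr)
  assume "\<not> ?thesis"
  then have h: "\<forall>K\<in>Ks. measure N K + d \<le> measure N A" by (auto simp: not_less)
  have "(SUP K\<in>Ks. emeasure N K) \<le> ennreal (measure N A - d)"
    apply (rule SUP_least)
    using h finite_measure.emeasure_eq_measure[OF fm] by (auto intro!: ennreal_leI)
  hence "ennreal (measure N A) \<le> ennreal (measure N A - d)"
    using eq finite_measure.emeasure_eq_measure[OF fm] by metis
  moreover obtain K where "K \<in> Ks" using ne by auto
  hence "measure N K + d \<le> measure N A" using h by blast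
  hence "measure N A - d \<ge> 0" using measure_nonneg[of N K] by linarith
  ultimately have "measure N A \<le> measure N A - d" by (simp add: ennreal_le_iff)
  with d show False by simp
qed

lemma approx_outer:
  assumes fm: "finite_measure N" and eq: "emeasure N A = (INF K\<in>Ks. emeasure N K)"
    and d: "0 < d"
  shows "\<exists>K\<in>Ks. measure N K < measure N A + d"
proof (rule ccontr)
  assume "\<not> ?thesis"
  then have h: "\<forall>K\<in>Ks. measure N A + d \<le> measure N K" by (auto simp: not_less)
  have "ennreal (measure N A + d) \<le> (INF K\<in>Ks. emeasure N K)"
    apply (rule INF_greatest)
    using h finite_measure.emeasure_eq_measure[OF fm] by (auto intro!: ennreal_leI)
  hence "ennreal (measure N A + d) \<le> ennreal (measure N A)"
    using eq finite_measure.emeasure_eq_measure[OF fm] by metis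
  hence "measure N A + d \<le> measure N A" by (simp add: ennreal_le_iff)
  with d show False by simp
qed

lemma regular_dom:
  fixes N \<nu> :: "'b::t2_space measure"
  assumes reg: "regular_borel N" and fN: "finite_measure N" and sv: "sets \<nu> = sets borel"
    and fv: "finite_measure \<nu>" and C: "0 \<le> C"
    and dom: "\<And>X. X \<in> sets borel \<Longrightarrow> measure \<nu> X \<le> C * measure N X"
  shows "regular_borel \<nu>"
  unfolding regular_borel_def
proof (intro conjI ballI sv)
  fix A :: "'b set" assume A: "A \<in> sets borel"
  have sN: "sets N = sets borel" using reg unfolding regular_borel_def by auto
  have eN: "emeasure \<nu> X = ennreal (measure \<nu> X)" for X
    using finite_measure.emeasure_eq_measure[OF fv] by auto
  have cb: "compact K \<Longrightarrow> K \<in> sets borel" for K :: "'b set"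
    by (metis borel_closed compact_imp_closed)
  show "emeasure \<nu> A = (SUP K\<in>{K. compact K \<and> K \<subseteq> A}. emeasure \<nu> K)"
  proof (rule antisym)
    show "(SUP K\<in>{K. compact K \<and> K \<subseteq> A}. emeasure \<nu> K) \<le> emeasure \<nu> A"
      by (rule SUP_least) (use A sv in \<open>auto intro!: emeasure_mono\<close>)
    show "emeasure \<nu> A \<le> (SUP K\<in>{K. compact K \<and> K \<subseteq> A}. emeasure \<nu> K)"
    proof (rule ennreal_le_epsilon)
      fix e :: real assume e: "0 < e"
      have eqN: "emeasure N A = (SUP K\<in>{K. compact K \<and> K \<subseteq> A}. emeasure N K)"
        using reg A unfolding regular_borel_def by blast
      have "{} \<in> {K. compact K \<and> K \<subseteq> A}" by simp
      hence neK: "{K. compact K \<and> K \<subseteq> A} \<noteq> {}" by blast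
      have ed: "0 < e / (C + 1)" using e C by simp
      from approx_inner[OF fN eqN neK ed] obtain K where K: "compact K" "K \<subseteq> A"
        and lt: "measure N A < measure N K + e / (C + 1)" by auto
      have Kb: "K \<in> sets borel" using cb K by auto
      have "measure \<nu> A = measure \<nu> K + measure \<nu> (A - K)"
        using finite_measure.finite_measure_Diff[OF fv, of A K] A Kb K sv by simp
      also have "measure \<nu> (A - K) \<le> C * measure N (A - K)" using A Kb by (intro dom) auto
      also have "measure N (A - K) = measure N A - measure N K"
        using finite_measure.finite_measure_Diff[OF fN, of A K] A Kb K sN by simp
      also have "C * (measure N A - measure N K) \<le> C * (e / (C + 1))"
        using lt C by (intro mult_left_mono) auto
      also have "C * (e / (C + 1)) \<le> e" using C e by (simp add: field_simps)
      finally have "measure \<nu> A \<le> measure \<nu> K + e" by simp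
      hence "emeasure \<nu> A \<le> emeasure \<nu> K + ennreal e"
        using eN e by (simp add: ennreal_plus[symmetric] ennreal_leI del: ennreal_plus)
      also have "emeasure \<nu> K \<le> (SUP K\<in>{K. compact K \<and> K \<subseteq> A}. emeasure \<nu> K)"
        using K by (intro SUP_upper) auto
      finally show "emeasure \<nu> A \<le> (SUP K\<in>{K. compact K \<and> K \<subseteq> A}. emeasure \<nu> K) + ennreal e"
        by simp
    qed
  qed
  show "emeasure \<nu> A = (INF U\<in>{U. open U \<and> A \<subseteq> U}. emeasure \<nu> U)"
  proof (rule antisym)
    show "emeasure \<nu> A \<le> (INF U\<in>{U. open U \<and> A \<subseteq> U}. emeasure \<nu> U)"
      by (rule INF_greatest) (use sv in \<open>auto intro!: emeasure_mono\<close>)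
    show "(INF U\<in>{U. open U \<and> A \<subseteq> U}. emeasure \<nu> U) \<le> emeasure \<nu> A"
    proof (rule ennreal_le_epsilon)
      fix e :: real assume e: "0 < e"
      have eqN: "emeasure N A = (INF U\<in>{U. open U \<and> A \<subseteq> U}. emeasure N U)"
        using conjunct2[OF reg[unfolded regular_borel_def], THEN bspec, OF A] by (rule conjunct2)
      have ed: "0 < e / (C + 1)" using e C by simp
      from approx_outer[OF fN eqN ed] obtain U where U: "open U" "A \<subseteq> U"
        and lt: "measure N U < measure N A + e / (C + 1)" by auto
      have Ub: "U \<in> sets borel" using U by auto
      have "measure \<nu> U = measure \<nu> A + measure \<nu> (U - A)"
        using finite_measure.finite_measure_Diff[OF fv, of U A] A Ub U sv by simp
      also have "measure \<nu> (U - A) \<le> C * measure N (U - A)" using A Ub by (intro dom) auto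
      also have "measure N (U - A) = measure N U - measure N A"
        using finite_measure.finite_measure_Diff[OF fN, of U A] A Ub U sN by simp
      also have "C * (measure N U - measure N A) \<le> C * (e / (C + 1))"
        using lt C by (intro mult_left_mono) auto
      also have "C * (e / (C + 1)) \<le> e" using C e by (simp add: field_simps)
      finally have "measure \<nu> U \<le> measure \<nu> A + e" by simp
      hence "emeasure \<nu> U \<le> emeasure \<nu> A + ennreal e"
        using eN e by (simp add: ennreal_plus[symmetric] ennreal_leI del: ennreal_plus)
      moreover have "(INF U\<in>{U. open U \<and> A \<subseteq> U}. emeasure \<nu> U) \<le> emeasure \<nu> U"
        using U by (intro INF_lower) auto
      ultimately show "(INF U\<in>{U. open U \<and> A \<subseteq> U}. emeasure \<nu> U) \<le> emeasure \<nu> A + ennreal e"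
        by (meson order_trans)
    qed
  qed
qed


lemma sum_partition:
  assumes pl: "prob_space lam" and fin: "finite I" and dj: "disjoint_family_on A I"
    and un: "(\<Union>i\<in>I. A i) = UNIV" and As: "\<And>i. i \<in> I \<Longrightarrow> A i \<in> sets lam"
    and B: "B \<in> sets lam"
  shows "(\<Sum>i\<in>I. measure lam (B \<inter> A i)) = measure lam B"
proof -
  have "measure lam (\<Union>i\<in>I. B \<inter> A i) = (\<Sum>i\<in>I. measure lam (B \<inter> A i))"
    apply (rule measure_finite_Union[OF fin])
    using As B dj apply (auto simp: disjoint_family_on_def)[2]
    using finite_measure.emeasure_finite[OF prob_space.finite_measure[OF pl]] by auto
  moreover have "(\<Union>i\<in>I. B \<inter> A i) = B" using un by blast
  ultimately show ?thesis by simp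
qed

theorem lemma3p2:
  fixes lam :: "'a::{topological_group_add, t2_space} measure"
    and lam2 :: "('a \<times> 'a) measure"
    and \<E> :: "'a set set"
    and y :: 'a
  assumes "compact (UNIV :: 'a set)"
    and "haar_prob lam"
    and "haar_prod lam lam2"
    and "finite_borel_partition \<E>"
  shows "\<exists>\<nu> :: ('a \<times> 'a) measure.
           sets \<nu> = sets borel \<and>
           (\<forall>D \<in> sets borel. emeasure \<nu> D =
              ennreal (\<Sum>E \<in> {E \<in> \<E>. measure lam E > 0}.
                 measure lam2 (D \<inter> (E \<times> ((\<lambda>e. e + y) ` E))) / measure lam E)) \<and>
           regular_borel_prob \<nu> \<and>
           (\<forall>B \<in> sets borel. measure \<nu> (B \<times> UNIV) = measure lam B \<and>
                              measure \<nu> (UNIV \<times> B) = measure lam B)"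
proof -
  have rpl: "regular_borel_prob lam" using assms(2) unfolding haar_prob_def by blast
  have regl: "regular_borel lam" and pl: "prob_space lam"
    using rpl unfolding regular_borel_prob_def by blast+
  have sl: "sets lam = sets borel" using regl unfolding regular_borel_def by blast
  have inv: "\<And>A. A \<in> sets borel \<Longrightarrow> emeasure lam ((\<lambda>x. x + y) ` A) = emeasure lam A"
    using assms(2) unfolding haar_prob_def by blast
  have rpl2: "regular_borel_prob lam2" using assms(3) unfolding haar_prod_def by blast
  have regl2: "regular_borel lam2" and pl2: "prob_space lam2"
    using rpl2 unfolding regular_borel_prob_def by blast+
  have sl2: "sets lam2 = sets borel" using regl2 unfolding regular_borel_def by blast
  have rect: "\<And>A B. A \<in> sets borel \<Longrightarrow> B \<in> sets borel \<Longrightarrow>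
      emeasure lam2 (A \<times> B) = emeasure lam A * emeasure lam B"
    using assms(3) unfolding haar_prod_def by blast
  have fin: "finite \<E>" and Eb: "\<E> \<subseteq> sets borel" and dj: "disjoint \<E>" and unE: "\<Union>\<E> = UNIV"
    using assms(4) unfolding finite_borel_partition_def by auto
  have spl: "space lam = UNIV" using sets_eq_imp_space_eq[OF sl] by simp
  have spl2: "space lam2 = UNIV" using sets_eq_imp_space_eq[OF sl2] by simp
  have fml: "finite_measure lam" using pl by (rule prob_space.finite_measure)
  have fml2: "finite_measure lam2" using pl2 by (rule prob_space.finite_measure)
  define T where "T E = (\<lambda>e. e + y) ` E" for E :: "'a set"
  have Tpre: "T E = (\<lambda>x. x - y) -` E" for E
    unfolding T_def by (auto simp: image_iff) (metis diff_add_cancel)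
  have cm: "(\<lambda>x::'a. x - y) \<in> borel_measurable borel"
    by (intro borel_measurable_continuous_onI continuous_intros)
  have Tb: "T E \<in> sets borel" if "E \<in> sets borel" for E
    unfolding Tpre using measurable_sets_borel[OF cm that] .
  have mT: "measure lam (T E) = measure lam E" if "E \<in> sets borel" for E
    unfolding measure_def T_def using inv[OF that] by simp
  have cfst: "(fst :: 'a \<times> 'a \<Rightarrow> 'a) \<in> borel_measurable borel"
    by (intro borel_measurable_continuous_onI continuous_intros)
  have csnd: "(snd :: 'a \<times> 'a \<Rightarrow> 'a) \<in> borel_measurable borel"
    by (intro borel_measurable_continuous_onI continuous_intros)
  have rectb: "A \<times> B \<in> sets borel" if "A \<in> sets borel" "B \<in> sets borel" for A B :: "'a set"
  proof -
    have "A \<times> B = fst -` A \<inter> snd -` B" by auto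
    thus ?thesis using measurable_sets_borel[OF cfst that(1)] measurable_sets_borel[OF csnd that(2)]
      by auto
  qed
  have mrect: "measure lam2 (A \<times> B) = measure lam A * measure lam B"
    if "A \<in> sets borel" "B \<in> sets borel" for A B
    unfolding measure_def using rect[OF that] by (simp add: enn2real_mult)
  define S where "S = {E \<in> \<E>. measure lam E > 0}"
  have finS: "finite S" using fin unfolding S_def by auto
  have SE: "S \<subseteq> \<E>" unfolding S_def by auto
  have Sb: "E \<in> sets borel" if "E \<in> S" for E using that SE Eb by auto
  have Spos: "measure lam E > 0" if "E \<in> S" for E using that unfolding S_def by auto
  define R where "R E = E \<times> T E" for E
  have Rb: "R E \<in> sets borel" if "E \<in> sets borel" for E
    unfolding R_def using rectb[OF that Tb[OF that]] .
  define f where "f x = (\<Sum>E\<in>S. indicator (R E) x / measure lam E)" for x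
  define \<nu> where "\<nu> = density lam2 (\<lambda>x. ennreal (f x))"
  have fm: "f \<in> borel_measurable lam2"
    unfolding f_def
    by (intro borel_measurable_sum borel_measurable_divide borel_measurable_indicator
        borel_measurable_const) (use Rb Sb sl2 in auto)
  have sv: "sets \<nu> = sets borel" unfolding \<nu>_def using sl2 by simp
  define s where "s D = (\<Sum>E\<in>S. measure lam2 (D \<inter> R E) / measure lam E)" for D
  have snn: "0 \<le> s D" for D unfolding s_def by (intro sum_nonneg divide_nonneg_nonneg) auto
  have formula: "emeasure \<nu> D = ennreal (s D)" if D: "D \<in> sets borel" for D
  proof -
    have "emeasure \<nu> D = (\<integral>\<^sup>+x. ennreal (f x) * indicator D x \<partial>lam2)"
      unfolding \<nu>_def by (rule emeasure_density) (use fm D sl2 in auto)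
    also have "\<dots> = (\<integral>\<^sup>+x. (\<Sum>E\<in>S. ennreal (1 / measure lam E) * indicator (D \<inter> R E) x) \<partial>lam2)"
    proof (rule nn_integral_cong)
      fix x
      have "ennreal (f x) = (\<Sum>E\<in>S. ennreal (indicator (R E) x / measure lam E))"
        unfolding f_def by (subst sum_ennreal) auto
      also have "\<dots> = (\<Sum>E\<in>S. ennreal (1 / measure lam E) * indicator (R E) x)"
        by (intro sum.cong refl) (auto simp: indicator_def)
      finally show "ennreal (f x) * indicator D x =
          (\<Sum>E\<in>S. ennreal (1 / measure lam E) * indicator (D \<inter> R E) x)"
        by (cases "x \<in> D") (auto simp: indicator_def)
    qed
    also have "\<dots> = (\<Sum>E\<in>S. \<integral>\<^sup>+x. ennreal (1 / measure lam E) * indicator (D \<inter> R E) x \<partial>lam2)"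
      by (rule nn_integral_sum) (use D Rb Sb sl2 in auto)
    also have "\<dots> = (\<Sum>E\<in>S. ennreal (1 / measure lam E) * emeasure lam2 (D \<inter> R E))"
      by (intro sum.cong refl nn_integral_cmult_indicator) (use D Rb Sb sl2 in auto)
    also have "\<dots> = (\<Sum>E\<in>S. ennreal (measure lam2 (D \<inter> R E) / measure lam E))"
      by (intro sum.cong refl)
        (simp add: finite_measure.emeasure_eq_measure[OF fml2] ennreal_mult''[symmetric])
    also have "\<dots> = ennreal (s D)" unfolding s_def by (subst sum_ennreal) auto
    finally show ?thesis .
  qed
  have meas: "measure \<nu> D = s D" if "D \<in> sets borel" for D
    unfolding measure_def using formula[OF that] snn by simp
  have marg1: "s (B \<times> UNIV) = measure lam B" if B: "B \<in> sets borel" for B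
  proof -
    have "s (B \<times> UNIV) = (\<Sum>E\<in>S. measure lam (B \<inter> E))"
      unfolding s_def
    proof (intro sum.cong refl)
      fix E assume E: "E \<in> S"
      have "(B \<times> UNIV) \<inter> R E = (B \<inter> E) \<times> T E" unfolding R_def by auto
      hence "measure lam2 ((B \<times> UNIV) \<inter> R E) = measure lam (B \<inter> E) * measure lam E"
        using mrect[of "B \<inter> E" "T E"] B Sb[OF E] Tb mT by auto
      thus "measure lam2 ((B \<times> UNIV) \<inter> R E) / measure lam E = measure lam (B \<inter> E)"
        using Spos[OF E] by simp
    qed
    also have "\<dots> = (\<Sum>E\<in>\<E>. measure lam (B \<inter> E))"
    proof (rule sum.mono_neutral_left[OF fin SE], intro ballI)
      fix E assume E: "E \<in> \<E> - S"
      hence "measure lam E \<le> 0" unfolding S_def by auto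
      moreover have "measure lam (B \<inter> E) \<le> measure lam E"
        using E Eb B sl by (intro finite_measure.finite_measure_mono[OF fml]) auto
      ultimately show "measure lam (B \<inter> E) = 0" using measure_nonneg[of lam "B \<inter> E"] by linarith
    qed
    also have "\<dots> = measure lam B"
      by (rule sum_partition[OF pl fin, of "\<lambda>E. E"])
        (use dj unE Eb sl B in \<open>auto simp: disjoint_def disjoint_family_on_def\<close>)
    finally show ?thesis .
  qed
  have marg2: "s (UNIV \<times> B) = measure lam B" if B: "B \<in> sets borel" for B
  proof -
    have "s (UNIV \<times> B) = (\<Sum>E\<in>S. measure lam (B \<inter> T E))"
      unfolding s_def
    proof (intro sum.cong refl)
      fix E assume E: "E \<in> S"
      have "(UNIV \<times> B) \<inter> R E = E \<times> (B \<inter> T E)" unfolding R_def by auto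
      hence "measure lam2 ((UNIV \<times> B) \<inter> R E) = measure lam E * measure lam (B \<inter> T E)"
        using mrect[of E "B \<inter> T E"] B Sb[OF E] Tb by auto
      thus "measure lam2 ((UNIV \<times> B) \<inter> R E) / measure lam E = measure lam (B \<inter> T E)"
        using Spos[OF E] by simp
    qed
    also have "\<dots> = (\<Sum>E\<in>\<E>. measure lam (B \<inter> T E))"
    proof (rule sum.mono_neutral_left[OF fin SE], intro ballI)
      fix E assume E: "E \<in> \<E> - S"
      hence "measure lam E \<le> 0" unfolding S_def by auto
      moreover have "measure lam (B \<inter> T E) \<le> measure lam (T E)"
        using E Eb B sl Tb by (intro finite_measure.finite_measure_mono[OF fml]) auto
      moreover have "measure lam (T E) = measure lam E" using E Eb mT by auto
      ultimately show "measure lam (B \<inter> T E) = 0" using measure_nonneg[of lam "B \<inter> T E"] by linarith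
    qed
    also have "\<dots> = measure lam B"
    proof (rule sum_partition[OF pl fin])
      show "disjoint_family_on T \<E>"
        using dj unfolding disjoint_family_on_def disjoint_def Tpre by blast
      show "(\<Union>E\<in>\<E>. T E) = UNIV"
      proof -
        have "x \<in> (\<Union>E\<in>\<E>. T E)" for x
        proof -
          have "x - y \<in> \<Union>\<E>" using unE by auto
          thus ?thesis unfolding Tpre by auto
        qed
        thus ?thesis by auto
      qed
      show "T E \<in> sets lam" if "E \<in> \<E>" for E using that Eb Tb sl by auto
      show "B \<in> sets lam" using B sl by auto
    qed
    finally show ?thesis .
  qed
  have spv: "space \<nu> = UNIV" using sets_eq_imp_space_eq[OF sv] by simp
  have "s UNIV = 1"
    using marg1[of UNIV] prob_space.prob_space[OF pl] spl by simp
  hence pv: "prob_space \<nu>"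
    by (intro prob_spaceI) (simp add: spv formula)
  define C where "C = (\<Sum>E\<in>S. 1 / measure lam E)"
  have C0: "0 \<le> C" unfolding C_def by (intro sum_nonneg) auto
  have dom: "measure \<nu> X \<le> C * measure lam2 X" if X: "X \<in> sets borel" for X
  proof -
    have "s X \<le> (\<Sum>E\<in>S. measure lam2 X * (1 / measure lam E))"
      unfolding s_def
    proof (intro sum_mono)
      fix E assume E: "E \<in> S"
      have "measure lam2 (X \<inter> R E) \<le> measure lam2 X"
        using X sl2 Rb Sb E by (intro finite_measure.finite_measure_mono[OF fml2]) auto
      thus "measure lam2 (X \<inter> R E) / measure lam E \<le> measure lam2 X * (1 / measure lam E)"
        using Spos[OF E] by (simp add: divide_right_mono)
    qed
    also have "\<dots> = C * measure lam2 X" unfolding C_def by (simp add: sum_distrib_left mult.commute)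
    finally show ?thesis using meas[OF X] by simp
  qed
  have rv: "regular_borel \<nu>"
    by (rule regular_dom[OF regl2 fml2 sv prob_space.finite_measure[OF pv] C0 dom])
  show ?thesis
    apply (rule exI[of _ \<nu>])
    using sv formula rv pv meas marg1 marg2 rectb
    unfolding regular_borel_prob_def s_def R_def T_def S_def
    by auto
qed

end
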